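(* Let $\alpha,\beta\in\mathbb{Z}[\rho]$ be nonzero with $N(\alpha)\ge 7$. Then $EJ_{\alpha\beta}$ is an $N(\beta)$-fold cover of $EJ_\alpha$.
   Context: $\rho=(1+\sqrt{-3})/2$, $\mathbb{Z}[\rho]=\{x+y\rho: x,y\in\mathbb{Z}\}$ with norm $N(x+y\rho)=x^2+xy+y^2$ (multiplicative). For $N(\gamma)\ge 7$, $EJ_\gamma$ is the Cayley graph on the additive group of $\mathbb{Z}[\rho]/(\gamma)$ with connection set $\{\pm[1]_\gamma,\pm[\rho]_\gamma,\pm[\rho^2]_\gamma\}$, where $[\xi]_\gamma$ is the residue class modulo $(\gamma)$. A graph $\Gamma_1$ is a cover of $\Gamma_2$ if there is a surjection $\phi:V(\Gamma_1)\to V(\Gamma_2)$ whose restriction to the neighbourhood of each $u\in V(\Gamma_1)$ is a bijection onto the neighbourhood of $\phi(u)$; it is a $k$-fold cover if moreover $|\phi^{-1}(v)|=k$ for all $v$. *)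

theory Defs
  imports Main
begin

text \<open>Eisenstein integers x + y*rho, rho = (1 + sqrt(-3))/2, represented as pairs (x, y).
  Since rho^2 = rho - 1, (a + b rho)(c + d rho) = (ac - bd) + (ad + bc + bd) rho.\<close>

type_synonym eis = "int \<times> int"

definition eadd :: "eis \<Rightarrow> eis \<Rightarrow> eis" where
  "eadd z w = (fst z + fst w, snd z + snd w)"

definition eneg :: "eis \<Rightarrow> eis" where
  "eneg z = (- fst z, - snd z)"

definition emult :: "eis \<Rightarrow> eis \<Rightarrow> eis" where
  "emult z w = (fst z * fst w - snd z * snd w,
                fst z * snd w + snd z * fst w + snd z * snd w)"

definition eone :: eis where "eone = (1, 0)"
definition erho :: eis where "erho = (0, 1)"
definition ezero :: eis where "ezero = (0, 0)"

definition enorm :: "eis \<Rightarrow> int" where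
  "enorm z = fst z ^ 2 + fst z * snd z + snd z ^ 2"

definition econg :: "eis \<Rightarrow> eis \<Rightarrow> eis \<Rightarrow> bool" where
  "econg \<gamma> a b \<longleftrightarrow> (\<exists>k. eadd a (eneg b) = emult \<gamma> k)"

definition erel :: "eis \<Rightarrow> (eis \<times> eis) set" where
  "erel \<gamma> = {(a, b). econg \<gamma> a b}"

definition eclass :: "eis \<Rightarrow> eis \<Rightarrow> eis set" where
  "eclass \<gamma> a = erel \<gamma> `` {a}"

definition eresidues :: "eis \<Rightarrow> eis set set" where
  "eresidues \<gamma> = UNIV // erel \<gamma>"

definition EJ_conn :: "eis set" where
  "EJ_conn = {eone, eneg eone, erho, eneg erho, emult erho erho, eneg (emult erho erho)}"

definition EJ_adj :: "eis \<Rightarrow> eis set \<Rightarrow> eis set \<Rightarrow> bool" where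
  "EJ_adj \<gamma> U W \<longleftrightarrow> U \<in> eresidues \<gamma> \<and> W \<in> eresidues \<gamma> \<and>
     (\<exists>u\<in>U. \<exists>s\<in>EJ_conn. W = eclass \<gamma> (eadd u s))"

definition is_cover_map ::
  "'a set \<Rightarrow> ('a \<Rightarrow> 'a \<Rightarrow> bool) \<Rightarrow> 'b set \<Rightarrow> ('b \<Rightarrow> 'b \<Rightarrow> bool) \<Rightarrow> ('a \<Rightarrow> 'b) \<Rightarrow> bool" where
  "is_cover_map V1 E1 V2 E2 \<phi> \<longleftrightarrow>
     \<phi> ` V1 = V2 \<and>
     (\<forall>u\<in>V1. bij_betw \<phi> {v\<in>V1. E1 u v} {w\<in>V2. E2 (\<phi> u) w})"

definition is_kfold_cover ::
  "'a set \<Rightarrow> ('a \<Rightarrow> 'a \<Rightarrow> bool) \<Rightarrow> 'b set \<Rightarrow> ('b \<Rightarrow> 'b \<Rightarrow> bool) \<Rightarrow> nat \<Rightarrow> bool" where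
  "is_kfold_cover V1 E1 V2 E2 k \<longleftrightarrow>
     (\<exists>\<phi>. is_cover_map V1 E1 V2 E2 \<phi> \<and> (\<forall>v\<in>V2. card {u\<in>V1. \<phi> u = v} = k))"

end

theory Submission imports Defs begin

lemma enorm_mult: "enorm (emult z w) = enorm z * enorm w"
  by (cases z; cases w) (simp add: enorm_def emult_def power2_eq_square algebra_simps)

lemma enorm_pos: assumes "z \<noteq> ezero" shows "enorm z > 0"
proof -
  obtain a b where z: "z = (a,b)" by (cases z)
  have "4 * enorm z = (2*a+b)^2 + 3*b^2" by (simp add: z enorm_def power2_eq_square algebra_simps)
  moreover have "(2*a+b)^2 + 3*b^2 > 0" using assms z
    by (smt (verit, best) ezero_def power2_less_eq_zero_iff zero_le_power2)
  ultimately show ?thesis by simp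
qed

lemma econg_iff: "econg \<gamma> u v \<longleftrightarrow> (\<exists>k. (fst u - fst v, snd u - snd v) = emult \<gamma> k)"
  by (simp add: econg_def eadd_def eneg_def)

lemma emult_add: "emult g (fst k + fst l, snd k + snd l) = (fst (emult g k) + fst (emult g l), snd (emult g k) + snd (emult g l))"
  by (simp add: emult_def algebra_simps)

lemma emult_assoc: "emult (emult a b) c = emult a (emult b c)"
  by (simp add: emult_def algebra_simps)

lemma econg_refl: "econg g u u"
  unfolding econg_iff by (rule exI[of _ "(0,0)"]) (simp add: emult_def)

lemma econg_sym: assumes "econg g u v" shows "econg g v u"
proof -
  obtain k where k: "(fst u - fst v, snd u - snd v) = emult g k" using assms econg_iff by blast
  show ?thesis unfolding econg_iff
    by (rule exI[of _ "(- fst k, - snd k)"]) (use k in \<open>auto simp: emult_def prod_eq_iff algebra_simps\<close>)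
qed

lemma econg_trans: assumes "econg g u v" "econg g v w" shows "econg g u w"
proof -
  obtain k where k: "(fst u - fst v, snd u - snd v) = emult g k" using assms econg_iff by blast
  obtain l where l: "(fst v - fst w, snd v - snd w) = emult g l" using assms econg_iff by blast
  show ?thesis unfolding econg_iff
    by (rule exI[of _ "(fst k + fst l, snd k + snd l)"]) (use k l in \<open>auto simp: emult_def prod_eq_iff algebra_simps\<close>)
qed

lemma equiv_erel: "equiv UNIV (erel g)"
  unfolding equiv_def refl_on_def sym_def trans_def erel_def
  using econg_refl econg_sym econg_trans by blast

lemma eclass_eq_iff: "eclass g u = eclass g v \<longleftrightarrow> econg g u v"
  unfolding eclass_def using equiv_class_eq_iff[OF equiv_erel, of u v g] by (simp add: erel_def)

lemma mem_eclass: "x \<in> eclass g u \<longleftrightarrow> econg g u x"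
  by (simp add: eclass_def erel_def)

lemma econg_add: "econg g u v \<Longrightarrow> econg g (eadd u s) (eadd v s)"
  by (simp add: econg_iff eadd_def)

lemma econg_mult_left: "econg (emult a b) u v \<Longrightarrow> econg a u v"
  unfolding econg_iff by (metis emult_assoc)

lemma emult_cancel: assumes "a \<noteq> ezero" "emult a x = emult a y" shows "x = y"
proof -
  have "emult a (fst x - fst y, snd x - snd y) = (0,0)"
    using assms(2) by (auto simp: emult_def prod_eq_iff algebra_simps)
  hence "enorm a * enorm (fst x - fst y, snd x - snd y) = 0"
    by (metis enorm_mult enorm_def fst_conv snd_conv power2_eq_square mult_zero_left add_0)
  hence "enorm (fst x - fst y, snd x - snd y) = 0" using enorm_pos[OF assms(1)] by simp
  hence "(fst x - fst y, snd x - snd y) = ezero"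
    using enorm_pos by (metis less_irrefl)
  thus ?thesis by (simp add: ezero_def prod_eq_iff)
qed


lemma small_mult_zero: fixes x y i g :: int
  assumes "0 \<le> x" "x < g" "0 \<le> y" "y < g" "x - y = i * g" shows "i = 0"
proof (rule ccontr)
  assume "i \<noteq> 0"
  hence "i \<ge> 1 \<or> i \<le> -1" by linarith
  moreover have "g > 0" using assms by simp
  ultimately have "i * g \<ge> g \<or> i * g \<le> - g"
    by (metis mult_le_cancel_right1 mult_minus_left mult_right_mono_neg  mult_le_cancel_right  less_le_not_le
        mult_1 mult_right_mono linorder_not_le order_less_imp_le  mult_minus1 )
  thus False using assms by linarith
qed

lemma residue_system:
  assumes "\<gamma> \<noteq> ezero"
  shows "\<exists>B. finite B \<and> card B = nat (enorm \<gamma>) \<and> (\<forall>z. \<exists>r\<in>B. econg \<gamma> z r)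
            \<and> (\<forall>r\<in>B. \<forall>r'\<in>B. econg \<gamma> r r' \<longrightarrow> r = r')"
proof -
  obtain a b where gam: "\<gamma> = (a,b)" by (cases \<gamma>)
  define g where "g = gcd a b"
  have ab: "a \<noteq> 0 \<or> b \<noteq> 0" using assms gam by (auto simp: ezero_def)
  have gpos: "g > 0" using ab g_def by simp
  obtain a' where a': "a = g * a'" using g_def by (metis gcd_dvd1 dvdE)
  obtain b' where b': "b = g * b'" using g_def by (metis gcd_dvd2 dvdE)
  obtain u v where uv: "u * a + v * b = g" using bezout_int g_def by metis
  define p where "p = u"
  define q where "q = - v"
  have det: "p * a' - q * b' = 1"
  proof -
    have "g * (p * a' - q * b') = g * 1" using uv a' b' p_def q_def by (simp add: algebra_simps)
    thus ?thesis using gpos by simp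
  qed
  define c where "c = a'^2 + a'*b' + b'^2"
  have "(a',b') \<noteq> ezero" using ab a' b' by (auto simp: ezero_def)
  hence cpos: "c > 0" using enorm_pos[of "(a',b')"] by (simp add: enorm_def c_def)
  define m where "m = g * c"
  have mpos: "m > 0" using gpos cpos m_def by simp
  have n: "enorm \<gamma> = g * m" using gam a' b' by (simp add: enorm_def m_def c_def power2_eq_square algebra_simps)
  define t where "t = p * b + q * (a + b)"
  have span: "econg \<gamma> z w \<longleftrightarrow> (\<exists>i j. fst z - fst w = i * g \<and> snd z - snd w = i * t + j * m)" for z w
  proof
    assume "econg \<gamma> z w"
    then obtain k where k: "(fst z - fst w, snd z - snd w) = emult \<gamma> k" using econg_iff by blast
    obtain x y where kk: "k = (x,y)" by (cases k)
    define i where "i = a' * x - b' * y"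
    define j where "j = p * y - q * x"
    have "fst z - fst w = i * g" using k kk gam a' b' by (simp add: emult_def i_def prod_eq_iff algebra_simps)
    moreover have "snd z - snd w = i * t + j * m"
    proof -
      have "snd z - snd w = a * y + b * x + b * y" using k kk gam by (simp add: emult_def prod_eq_iff)
      also have "\<dots> = i * t + j * m"
        unfolding i_def j_def t_def m_def c_def a' b' using det
        by algebra
      finally show ?thesis .
    qed
    ultimately show "\<exists>i j. fst z - fst w = i * g \<and> snd z - snd w = i * t + j * m" by blast
  next
    assume "\<exists>i j. fst z - fst w = i * g \<and> snd z - snd w = i * t + j * m"
    then obtain i j where ij: "fst z - fst w = i * g" "snd z - snd w = i * t + j * m" by blast
    have "(fst z - fst w, snd z - snd w) = emult \<gamma> (i*p + j*b', i*q + j*a')"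
      using ij gam det unfolding emult_def t_def m_def c_def a' b' prod_eq_iff fst_conv snd_conv
      by (intro conjI; algebra)
    thus "econg \<gamma> z w" using econg_iff by blast
  qed
  define B where "B = {0..<g} \<times> {0..<m}"
  have "finite B" by (simp add: B_def)
  moreover have "card B = nat (enorm \<gamma>)" using n gpos mpos by (simp add: B_def card_cartesian_product nat_mult_distrib)
  moreover have "\<forall>z. \<exists>r\<in>B. econg \<gamma> z r"
  proof
    fix z
    define r where "r = (fst z mod g, (snd z - (fst z div g) * t) mod m)"
    have "r \<in> B" using gpos mpos by (simp add: r_def B_def)
    moreover have "econg \<gamma> z r" unfolding span
    proof (intro exI conjI)
      show "fst z - fst r = (fst z div g) * g" by (simp add: r_def minus_mod_eq_div_mult)
      show "snd z - snd r = (fst z div g) * t + ((snd z - (fst z div g) * t) div m) * m"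
        using minus_mod_eq_div_mult[of "snd z - (fst z div g) * t" m] by (simp add: r_def)
    qed
    ultimately show "\<exists>r\<in>B. econg \<gamma> z r" by blast
  qed
  moreover have "\<forall>r\<in>B. \<forall>r'\<in>B. econg \<gamma> r r' \<longrightarrow> r = r'"
  proof (intro ballI impI)
    fix r r' assume rB: "r \<in> B" "r' \<in> B" and "econg \<gamma> r r'"
    then obtain i j where ij: "fst r - fst r' = i * g" "snd r - snd r' = i * t + j * m" using span by blast
    have "i = 0" using small_mult_zero[OF _ _ _ _ ij(1)] rB by (auto simp: B_def)
    hence "j = 0" using small_mult_zero[of "snd r" m "snd r'" j] ij(2) rB by (auto simp: B_def)
    show "r = r'" using ij \<open>i = 0\<close> \<open>j = 0\<close> by (simp add: prod_eq_iff)
  qed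
  ultimately show ?thesis by blast
qed


lemma conn_distinct:
  assumes "s \<in> EJ_conn" "s' \<in> EJ_conn" "econg \<delta> s s'" "enorm \<delta> \<ge> 7"
  shows "s = s'"
proof (rule ccontr)
  assume ne: "s \<noteq> s'"
  obtain k where k: "(fst s - fst s', snd s - snd s') = emult \<delta> k" using assms(3) econg_iff by blast
  have "k \<noteq> ezero" using k ne by (auto simp: ezero_def emult_def prod_eq_iff)
  hence "enorm k \<ge> 1" using enorm_pos by fastforce
  hence "enorm (emult \<delta> k) \<ge> 7" using assms(4) enorm_mult
    by (metis dual_order.trans mult.right_neutral mult_left_mono order.trans zero_le_numeral le_numeral_extra(1) less_imp_le less_le_trans)
  hence "enorm (fst s - fst s', snd s - snd s') \<ge> 7" using k by simp
  moreover have "enorm (fst s - fst s', snd s - snd s') \<le> 4"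
    using assms(1,2) by (auto simp: EJ_conn_def eone_def erho_def eneg_def emult_def enorm_def)
  ultimately show False by simp
qed

lemma eresidues_eq: "eresidues g = range (eclass g)"
  by (auto simp: eresidues_def quotient_def eclass_def)

lemma neighbours:
  "{v \<in> eresidues g. EJ_adj g (eclass g u) v} = (\<lambda>s. eclass g (eadd u s)) ` EJ_conn"
proof -
  have "EJ_adj g (eclass g u) v \<longleftrightarrow> (\<exists>s\<in>EJ_conn. v = eclass g (eadd u s))" for v
  proof
    assume "EJ_adj g (eclass g u) v"
    then obtain u' s where u': "u' \<in> eclass g u" "s \<in> EJ_conn" "v = eclass g (eadd u' s)"
      unfolding EJ_adj_def by blast
    have "econg g u u'" using u'(1) mem_eclass by blast
    hence "eclass g (eadd u' s) = eclass g (eadd u s)"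
      using eclass_eq_iff econg_add econg_sym by metis
    thus "\<exists>s\<in>EJ_conn. v = eclass g (eadd u s)" using u' by blast
  next
    assume "\<exists>s\<in>EJ_conn. v = eclass g (eadd u s)"
    then show "EJ_adj g (eclass g u) v" unfolding EJ_adj_def eresidues_eq
      using mem_eclass econg_refl by blast
  qed
  thus ?thesis by (auto simp: eresidues_eq)
qed

theorem theorem4p1:
  fixes \<alpha> \<beta> :: eis
  assumes "\<alpha> \<noteq> ezero" and "\<beta> \<noteq> ezero" and "enorm \<alpha> \<ge> 7"
  shows "is_kfold_cover (eresidues (emult \<alpha> \<beta>)) (EJ_adj (emult \<alpha> \<beta>))
                        (eresidues \<alpha>) (EJ_adj \<alpha>) (nat (enorm \<beta>))"
proof -
  define \<gamma> where "\<gamma> = emult \<alpha> \<beta>"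
  have nb: "enorm \<beta> \<ge> 1" using enorm_pos[OF assms(2)] by simp
  have ng: "enorm \<gamma> \<ge> 7" unfolding \<gamma>_def enorm_mult using assms(3) nb
    by (metis mult.right_neutral mult_left_mono order.trans zero_le_numeral dual_order.trans)
  define \<phi> where "\<phi> C = erel \<alpha> `` C" for C
  have phi: "\<phi> (eclass \<gamma> u) = eclass \<alpha> u" for u
  proof
    show "\<phi> (eclass \<gamma> u) \<subseteq> eclass \<alpha> u"
      unfolding \<phi>_def by (auto simp: erel_def mem_eclass \<gamma>_def) (meson econg_mult_left econg_trans)
    show "eclass \<alpha> u \<subseteq> \<phi> (eclass \<gamma> u)"
      unfolding \<phi>_def using econg_refl by (fastforce simp: erel_def mem_eclass)
  qed
  have cover: "is_cover_map (eresidues \<gamma>) (EJ_adj \<gamma>) (eresidues \<alpha>) (EJ_adj \<alpha>) \<phi>"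
    unfolding is_cover_map_def
  proof (intro conjI ballI)
    show "\<phi> ` eresidues \<gamma> = eresidues \<alpha>" unfolding eresidues_eq using phi by (auto simp: image_iff)
  next
    fix U assume "U \<in> eresidues \<gamma>"
    then obtain u where U: "U = eclass \<gamma> u" by (auto simp: eresidues_eq)
    show "bij_betw \<phi> {v \<in> eresidues \<gamma>. EJ_adj \<gamma> U v} {w \<in> eresidues \<alpha>. EJ_adj \<alpha> (\<phi> U) w}"
      unfolding U phi neighbours bij_betw_def
    proof
      show "inj_on \<phi> ((\<lambda>s. eclass \<gamma> (eadd u s)) ` EJ_conn)"
      proof (rule inj_onI, clarify)
        fix s s' assume s: "s \<in> EJ_conn" "s' \<in> EJ_conn"
          and eq: "\<phi> (eclass \<gamma> (eadd u s)) = \<phi> (eclass \<gamma> (eadd u s'))"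
        hence "econg \<alpha> (eadd u s) (eadd u s')" using phi eclass_eq_iff by metis
        hence "econg \<alpha> s s'" by (simp add: econg_iff eadd_def)
        hence "s = s'" using conn_distinct s assms(3) by blast
        thus "eclass \<gamma> (eadd u s) = eclass \<gamma> (eadd u s')" by simp
      qed
      show "\<phi> ` (\<lambda>s. eclass \<gamma> (eadd u s)) ` EJ_conn = (\<lambda>s. eclass \<alpha> (eadd u s)) ` EJ_conn"
        using phi by (simp add: image_image)
    qed
  qed
  obtain B where B: "finite B" "card B = nat (enorm \<beta>)" "\<forall>z. \<exists>r\<in>B. econg \<beta> z r"
    "\<forall>r\<in>B. \<forall>r'\<in>B. econg \<beta> r r' \<longrightarrow> r = r'"
    using residue_system[OF assms(2)] by blast
  have fib: "card {C \<in> eresidues \<gamma>. \<phi> C = V} = nat (enorm \<beta>)" if VV: "V \<in> eresidues \<alpha>" for V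
  proof -
    obtain v where V: "V = eclass \<alpha> v" using VV unfolding eresidues_eq by blast
    define f where "f r = eclass \<gamma> (eadd v (emult \<alpha> r))" for r
    have "{C \<in> eresidues \<gamma>. \<phi> C = V} = f ` B"
    proof
      show "f ` B \<subseteq> {C \<in> eresidues \<gamma>. \<phi> C = V}"
      proof clarify
        fix r assume "r \<in> B"
        have "econg \<alpha> v (eadd v (emult \<alpha> r))" unfolding econg_iff
          by (rule exI[of _ "(- fst r, - snd r)"]) (simp add: eadd_def emult_def algebra_simps)
        thus "f r \<in> eresidues \<gamma> \<and> \<phi> (f r) = V" unfolding f_def V phi eresidues_eq
          using eclass_eq_iff econg_sym by auto
      qed
      show "{C \<in> eresidues \<gamma>. \<phi> C = V} \<subseteq> f ` B"
      proof (rule subsetI)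
        fix C assume "C \<in> {C \<in> eresidues \<gamma>. \<phi> C = V}"
        hence "C \<in> eresidues \<gamma>" "\<phi> C = V" by auto
        then obtain w where w: "C = eclass \<gamma> w" "eclass \<alpha> w = eclass \<alpha> v"
          using phi V by (auto simp: eresidues_eq)
        hence "econg \<alpha> w v" using eclass_eq_iff by blast
        then obtain k where k: "(fst w - fst v, snd w - snd v) = emult \<alpha> k" using econg_iff by blast
        obtain r where r: "r \<in> B" "econg \<beta> k r" using B(3) by blast
        then obtain j where j: "(fst k - fst r, snd k - snd r) = emult \<beta> j" using econg_iff by blast
        have "econg \<gamma> w (eadd v (emult \<alpha> r))" unfolding econg_iff \<gamma>_def emult_assoc
        proof (rule exI[of _ j])
          have "emult \<alpha> (emult \<beta> j) = emult \<alpha> (fst k - fst r, snd k - snd r)" using j by simp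
          also have "\<dots> = (fst w - fst (eadd v (emult \<alpha> r)), snd w - snd (eadd v (emult \<alpha> r)))"
            using k by (simp add: emult_def eadd_def prod_eq_iff algebra_simps)
          finally show "(fst w - fst (eadd v (emult \<alpha> r)), snd w - snd (eadd v (emult \<alpha> r))) = emult \<alpha> (emult \<beta> j)" by simp
        qed
        thus "C \<in> f ` B" using r w eclass_eq_iff unfolding f_def by blast
      qed
    qed
    moreover have "inj_on f B"
    proof (rule inj_onI)
      fix r r' assume r: "r \<in> B" "r' \<in> B" and "f r = f r'"
      hence "econg \<gamma> (eadd v (emult \<alpha> r)) (eadd v (emult \<alpha> r'))" using eclass_eq_iff f_def by metis
      then obtain j where j: "(fst (eadd v (emult \<alpha> r)) - fst (eadd v (emult \<alpha> r')),
          snd (eadd v (emult \<alpha> r)) - snd (eadd v (emult \<alpha> r'))) = emult \<alpha> (emult \<beta> j)"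
        using econg_iff \<gamma>_def emult_assoc by metis
      have "emult \<alpha> (fst r - fst r', snd r - snd r') = emult \<alpha> (emult \<beta> j)"
        using j by (simp add: emult_def eadd_def prod_eq_iff algebra_simps)
      hence "(fst r - fst r', snd r - snd r') = emult \<beta> j" using emult_cancel[OF assms(1)] by blast
      hence "econg \<beta> r r'" using econg_iff by blast
      thus "r = r'" using B(4) r by blast
    qed
    ultimately show ?thesis using B(2) card_image by metis
  qed
  show ?thesis unfolding is_kfold_cover_def \<gamma>_def[symmetric]
    using cover fib by blast
qed

end
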